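(* Assume GCH. Let $F:[\aleph_\omega]^\omega\to[[\aleph_\omega]^\omega]^\omega$ be any function. Then there is an enumeration $\{a_{\alpha,j}:\alpha<\aleph_{\omega+1},\ j<\omega_1\}$ of $[\aleph_\omega]^\omega$ without repetition such that for each $\alpha<\aleph_{\omega+1}$ and $j<\omega_1$: if $x\in[a_{\alpha,j}]^\omega$ then $F(x)\subseteq\{a_{\eta,i}:\eta\le\alpha,\ i<\omega_1\}$.
   Context: For a set $S$, $[S]^\omega$ denotes the family of countably infinite subsets of $S$. *)

theory Defs
  imports Main "HOL-Library.Countable_Set"
begin

definition ctbl_subsets :: "'a set \<Rightarrow> 'a set set" where
  "ctbl_subsets S = {x. x \<subseteq> S \<and> countable x \<and> infinite x}"

definition GCH_on_type :: "'a itself \<Rightarrow> bool" where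
  "GCH_on_type _ \<longleftrightarrow> (\<forall>A :: 'a set. infinite A \<longrightarrow> (card_of (Pow A), cardSuc (card_of A)) \<in> ordIso)"

definition is_aleph_omega :: "'a set \<Rightarrow> bool" where
  "is_aleph_omega X \<longleftrightarrow> (\<exists>Xs :: nat \<Rightarrow> 'a set.
      countable (Xs 0) \<and> infinite (Xs 0) \<and>
      (\<forall>n. Xs n \<subseteq> Xs (Suc n) \<and> (card_of (Xs (Suc n)), cardSuc (card_of (Xs n))) \<in> ordIso) \<and>
      X = (\<Union>n. Xs n))"

end

theory Submission
  imports Defs
begin

context includes cardinal_syntax
begin

lemma ctbl_le:
  assumes "countable A" "infinite B" shows "|A| \<le>o |B|"
proof -
  from assms(1) obtain f :: "_ \<Rightarrow> nat" where "inj_on f A" by (auto simp: countable_def)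
  hence "|A| \<le>o |UNIV::nat set|" by (rule card_of_ordLeqI) auto
  moreover have "|UNIV::nat set| \<le>o |B|" using assms(2) infinite_iff_card_of_nat by blast
  ultimately show ?thesis by (rule ordLeq_transitive)
qed

lemma ctbl_iso:
  assumes "countable A" "infinite A" shows "|A| =o natLeq"
proof -
  have "|A| =o |UNIV::nat set|"
    unfolding ordIso_iff_ordLeq
    using ctbl_le[OF assms(1), of "UNIV::nat set"] ctbl_le[of "UNIV::nat set" A] assms by blast
  thus ?thesis by (rule ordIso_transitive[OF _ card_of_nat])
qed

lemma W_iso: "|Field (cardSuc natLeq)| =o cardSuc natLeq"
  by (rule card_of_Field_ordIso[OF cardSuc_Card_order[OF natLeq_Card_order]])

lemma W_inf: "infinite (Field (cardSuc natLeq))"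
  using cardSuc_finite[OF natLeq_Card_order] Field_natLeq by simp

lemma Pow_W:
  assumes GCH: "GCH_on_type TYPE('a)" and "countable (A::'a set)" "infinite A"
  shows "|Pow A| =o |Field (cardSuc natLeq)|"
proof -
  have 1: "|Pow A| =o cardSuc |A|" using GCH assms(3) unfolding GCH_on_type_def by blast
  have 2: "cardSuc |A| =o cardSuc natLeq"
    by (subst cardSuc_invar_ordIso[OF card_of_Card_order natLeq_Card_order]) (rule ctbl_iso[OF assms(2,3)])
  have "|Pow A| =o cardSuc natLeq" by (rule ordIso_transitive[OF 1 2])
  thus ?thesis by (rule ordIso_transitive[OF _ ordIso_symmetric[OF W_iso]])
qed

lemma Un_le:
  assumes "infinite C" "|A| \<le>o |C|" "|B| \<le>o |C|" shows "|A \<union> B| \<le>o |C|"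
  by (metis card_of_Un_ordLeq_infinite_Field Field_card_of card_of_Card_order assms)

definition Gstep :: "('a set \<Rightarrow> 'a set set) \<Rightarrow> 'a set set \<Rightarrow> 'a set set" where
  "Gstep F B = B \<union> (\<Union>a\<in>B. \<Union>x\<in>ctbl_subsets a. F x)"

definition clo :: "('a set \<Rightarrow> 'a set set) \<Rightarrow> 'a set set \<Rightarrow> 'a set set" where
  "clo F A = (\<Union>n. (Gstep F ^^ n) A)"

lemma clo_sup: "A \<subseteq> clo F A"
  unfolding clo_def using UN_upper[of 0 UNIV "\<lambda>n. (Gstep F ^^ n) A"] by simp

lemma clo_closed:
  assumes "a \<in> clo F A" "x \<in> ctbl_subsets a" shows "F x \<subseteq> clo F A"
proof -
  from assms(1) obtain n where "a \<in> (Gstep F ^^ n) A" unfolding clo_def by blast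
  hence "F x \<subseteq> (Gstep F ^^ Suc n) A" using assms(2) unfolding Gstep_def by auto
  thus ?thesis unfolding clo_def by blast
qed

lemma Gstep_S:
  assumes F: "\<forall>x \<in> ctbl_subsets X. F x \<in> ctbl_subsets (ctbl_subsets X)"
    and "B \<subseteq> ctbl_subsets X"
  shows "Gstep F B \<subseteq> ctbl_subsets X"
proof -
  have "F x \<subseteq> ctbl_subsets X" if "a \<in> B" "x \<in> ctbl_subsets a" for a x
  proof -
    have "x \<in> ctbl_subsets X" using that assms(2) unfolding ctbl_subsets_def by auto
    thus ?thesis using F unfolding ctbl_subsets_def by auto
  qed
  thus ?thesis using assms(2) unfolding Gstep_def by blast
qed

lemma Gstep_card:
  assumes GCH: "GCH_on_type TYPE('a)"
    and F: "\<forall>x \<in> ctbl_subsets X. F x \<in> ctbl_subsets (ctbl_subsets X)"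
    and B: "B \<subseteq> ctbl_subsets (X::'a set)" "|B| \<le>o |Field (cardSuc natLeq)|"
  shows "|Gstep F B| \<le>o |Field (cardSuc natLeq)|"
proof -
  let ?W = "Field (cardSuc natLeq)"
  have inner: "|\<Union>x\<in>ctbl_subsets a. F x| \<le>o |?W|" if a: "a \<in> B" for a
  proof (rule card_of_UNION_ordLeq_infinite[OF W_inf])
    have ac: "countable a" "infinite a" using a B(1) unfolding ctbl_subsets_def by auto
    have "|ctbl_subsets a| \<le>o |Pow a|" by (rule card_of_mono1) (auto simp: ctbl_subsets_def)
    thus "|ctbl_subsets a| \<le>o |?W|" by (rule ordLeq_ordIso_trans[OF _ Pow_W[OF GCH ac]])
    show "\<forall>x\<in>ctbl_subsets a. |F x| \<le>o |?W|"
    proof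
      fix x assume x: "x \<in> ctbl_subsets a"
      have "x \<in> ctbl_subsets X" using x a B(1) unfolding ctbl_subsets_def by auto
      hence "countable (F x)" using F unfolding ctbl_subsets_def by auto
      thus "|F x| \<le>o |?W|" using ctbl_le W_inf by blast
    qed
  qed
  have "|\<Union>a\<in>B. \<Union>x\<in>ctbl_subsets a. F x| \<le>o |?W|"
    by (rule card_of_UNION_ordLeq_infinite[OF W_inf B(2)]) (use inner in blast)
  thus ?thesis unfolding Gstep_def by (rule Un_le[OF W_inf B(2)])
qed

lemma clo_props:
  assumes GCH: "GCH_on_type TYPE('a)"
    and F: "\<forall>x \<in> ctbl_subsets X. F x \<in> ctbl_subsets (ctbl_subsets X)"
    and A: "A \<subseteq> ctbl_subsets (X::'a set)" "|A| \<le>o |Field (cardSuc natLeq)|"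
  shows "clo F A \<subseteq> ctbl_subsets X \<and> |clo F A| \<le>o |Field (cardSuc natLeq)|"
proof -
  have n: "(Gstep F ^^ n) A \<subseteq> ctbl_subsets X \<and> |(Gstep F ^^ n) A| \<le>o |Field (cardSuc natLeq)|" for n
  proof (induction n)
    case 0 then show ?case using A by simp
  next
    case (Suc n)
    hence h: "(Gstep F ^^ n) A \<subseteq> ctbl_subsets X" "|(Gstep F ^^ n) A| \<le>o |Field (cardSuc natLeq)|"
      by auto
    show ?case using Gstep_S[OF F h(1)] Gstep_card[OF GCH F h] by simp
  qed
  have "|UNIV::nat set| \<le>o |Field (cardSuc natLeq)|" by (rule ctbl_le[OF countableI_type W_inf])
  hence "|clo F A| \<le>o |Field (cardSuc natLeq)|" unfolding clo_def
    by (rule card_of_UNION_ordLeq_infinite[OF W_inf]) (use n in blast)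
  moreover have "clo F A \<subseteq> ctbl_subsets X" unfolding clo_def using n by blast
  ultimately show ?thesis by blast
qed

end



context includes cardinal_syntax
begin

lemma koenig:
  assumes GCH: "GCH_on_type TYPE('a)" and X: "is_aleph_omega (X::'a set)"
  shows "infinite X \<and> \<not> |ctbl_subsets X| \<le>o |X| \<and> |Field (cardSuc natLeq)| \<le>o |X|"
proof -
  obtain Xs :: "nat \<Rightarrow> 'a set" where X0: "countable (Xs 0)" "infinite (Xs 0)"
    and XS: "\<And>n. Xs n \<subseteq> Xs (Suc n)" "\<And>n. |Xs (Suc n)| =o cardSuc |Xs n|"
    and XU: "X = (\<Union>n. Xs n)"
    using X unfolding is_aleph_omega_def by blast
  have mono: "m \<le> n \<Longrightarrow> Xs m \<subseteq> Xs n" for m n by (rule lift_Suc_mono_le[of Xs, OF XS(1)])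
  have Xinf: "infinite (Xs n)" for n using X0(2) finite_subset[OF mono[of 0 n]] by blast
  have XnX: "Xs n \<subseteq> X" for n using XU by blast
  have XI: "infinite X" using Xinf[of 0] finite_subset[OF XnX[of 0]] by blast
  have W1: "|Field (cardSuc natLeq)| \<le>o |X|"
  proof -
    have "cardSuc |Xs 0| =o cardSuc natLeq"
      by (subst cardSuc_invar_ordIso[OF card_of_Card_order natLeq_Card_order]) (rule ctbl_iso[OF X0])
    hence "|Field (cardSuc natLeq)| =o |Xs (Suc 0)|"
      by (rule ordIso_transitive[OF ordIso_transitive[OF W_iso ordIso_symmetric] ordIso_symmetric[OF XS(2)[of 0]]])
    moreover have "|Xs (Suc 0)| \<le>o |X|" using XnX card_of_mono1 by blast
    ultimately show ?thesis by (rule ordIso_ordLeq_trans)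
  qed
  have NS: "\<not> |ctbl_subsets X| \<le>o |X|"
  proof
    assume "|ctbl_subsets X| \<le>o |X|"
    then obtain f where f: "inj_on f (ctbl_subsets X)" "f ` ctbl_subsets X \<subseteq> X"
      unfolding card_of_ordLeq[symmetric] by blast
    define Y where "Y n = {y \<in> ctbl_subsets X. f y \<in> Xs n}" for n
    define D where "D n = (\<Union>y\<in>Y n. y)" for n
    have Dle: "|D n \<union> Xs n| \<le>o |Xs n|" for n
    proof -
      have "|Y n| \<le>o |Xs n|"
        by (rule card_of_ordLeqI[of f]) (rule inj_on_subset[OF f(1)], auto simp: Y_def)
      moreover have "\<forall>y\<in>Y n. |y| \<le>o |Xs n|"
      proof
        fix y assume "y \<in> Y n"
        hence "countable y" unfolding Y_def ctbl_subsets_def by blast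
        thus "|y| \<le>o |Xs n|" using ctbl_le Xinf by blast
      qed
      ultimately have "|D n| \<le>o |Xs n|" unfolding D_def
        by (rule card_of_UNION_ordLeq_infinite[OF Xinf])
      thus ?thesis by (rule Un_le[OF Xinf]) (rule card_of_mono1, simp)
    qed
    have ex: "\<exists>z. z \<in> Xs (Suc n) - (D n \<union> Xs n)" for n
    proof (rule ccontr)
      assume "\<not> ?thesis"
      hence "Xs (Suc n) \<subseteq> D n \<union> Xs n" by blast
      hence "|Xs (Suc n)| \<le>o |D n \<union> Xs n|" by (rule card_of_mono1)
      hence "|Xs (Suc n)| \<le>o |Xs n|" using Dle by (rule ordLeq_transitive)
      moreover have "|Xs n| <o |Xs (Suc n)|"
        by (rule ordLess_ordIso_trans[OF cardSuc_greater[OF card_of_Card_order] ordIso_symmetric[OF XS(2)[of n]]])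
      ultimately show False using not_ordLess_ordLeq by blast
    qed
    then obtain z where z: "\<And>n. z n \<in> Xs (Suc n) - (D n \<union> Xs n)" by metis
    have zinj: "inj z"
    proof (rule injI)
      fix m n assume eq: "z m = z n"
      show "m = n"
      proof (rule ccontr)
        assume "m \<noteq> n"
        then consider "m < n" | "n < m" by linarith
        then show False
        proof cases
          case 1
          hence "z m \<in> Xs n" using z[of m] mono[of "Suc m" n] by auto
          thus False using z[of n] eq by auto
        next
          case 2
          hence "z n \<in> Xs m" using z[of n] mono[of "Suc n" m] by auto
          thus False using z[of m] eq by auto
        qed
      qed
    qed
    have "range z \<subseteq> X" using z XnX by blast
    moreover have "infinite (range z)" using zinj by (rule range_inj_infinite)
    ultimately have zS: "range z \<in> ctbl_subsets X"
      unfolding ctbl_subsets_def by simp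
    then obtain n where "f (range z) \<in> Xs n" using f(2) XU by blast
    hence "range z \<in> Y n" using zS unfolding Y_def by blast
    hence "z n \<in> D n" unfolding D_def by blast
    thus False using z[of n] by blast
  qed
  show ?thesis using XI NS W1 by blast
qed

end


context includes cardinal_syntax
begin

lemma main_constr:
  assumes GCH: "GCH_on_type TYPE('a)" and X: "is_aleph_omega (X::'a set)"
    and F: "\<forall>x \<in> ctbl_subsets X. F x \<in> ctbl_subsets (ctbl_subsets X)"
  shows "\<exists>a :: 'a set \<Rightarrow> nat set \<Rightarrow> 'a set.
     bij_betw (\<lambda>(\<alpha>, j). a \<alpha> j)
       (Field (cardSuc |X| ) \<times> Field (cardSuc natLeq)) (ctbl_subsets X) \<and>
     (\<forall>\<alpha> \<in> Field (cardSuc |X| ). \<forall>j \<in> Field (cardSuc natLeq).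
        \<forall>x \<in> ctbl_subsets (a \<alpha> j). \<forall>y \<in> F x. \<exists>\<eta> i. y = a \<eta> i \<and>
          \<eta> \<in> Field (cardSuc |X| ) \<and> (\<eta>, \<alpha>) \<in> cardSuc |X| \<and> i \<in> Field (cardSuc natLeq))"
proof -
  have XI: "infinite X" and NS: "\<not> |ctbl_subsets X| \<le>o |X|"
    and WX: "|Field (cardSuc natLeq)| \<le>o |X|"
    using koenig[OF GCH X] by blast+
  define S where "S = ctbl_subsets X"
  define W where "W = Field (cardSuc natLeq)"
  define R where "R = cardSuc |X|"
  define K where "K = Field R"
  have WI: "infinite W" unfolding W_def by (rule W_inf)
  have RC: "Card_order R" unfolding R_def by (rule cardSuc_Card_order[OF card_of_Card_order])
  have wo: "wo_rel R" unfolding wo_rel_def using RC card_order_on_well_order_on by blast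
  have "|Pow X| =o R" using GCH XI unfolding GCH_on_type_def R_def by blast
  moreover have "S \<subseteq> Pow X" by (auto simp: S_def ctbl_subsets_def)
  ultimately have K1a: "|S| \<le>o R" using ordLeq_ordIso_trans[OF card_of_mono1] by blast
  have "\<not> |S| <o R" unfolding R_def S_def
    using cardSuc_ordLeq_ordLess[OF card_of_Card_order card_of_Card_order] NS by blast
  hence SR: "|S| =o R" using K1a ordLeq_iff_ordLess_or_ordIso by blast
  have KS: "|K| =o |S|" unfolding K_def
    by (rule ordIso_transitive[OF card_of_Field_ordIso[OF RC] ordIso_symmetric[OF SR]])
  then obtain s where s: "bij_betw s K S" unfolding card_of_ordIso[symmetric] by blast
  have sS: "s \<alpha> \<in> S" if "\<alpha> \<in> K" for \<alpha> using s that bij_betwE by blast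
  have WX': "|W| \<le>o |X|" using WX unfolding W_def .
  have underS_le: "|underS R \<alpha>| \<le>o |X|" if "\<alpha> \<in> K" for \<alpha>
  proof -
    have "|underS R \<alpha>| <o R" using card_of_underS[OF RC] that unfolding K_def by blast
    thus ?thesis unfolding R_def
      using cardSuc_ordLeq_ordLess[OF card_of_Card_order card_of_Card_order] by blast
  qed
  have Pex: "\<exists>P. P \<subseteq> S - E \<and> |P| =o |W|" if E: "|E| \<le>o |X|" for E
  proof -
    have "\<not> |S - E| \<le>o |X|"
    proof
      assume "|S - E| \<le>o |X|"
      hence "|(S - E) \<union> E| \<le>o |X|" using Un_le[OF XI _ E] by blast
      moreover have "|S| \<le>o |(S - E) \<union> E|" by (rule card_of_mono1) blast
      ultimately have "|S| \<le>o |X|" by (rule ordLeq_transitive[rotated])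
      thus False using NS unfolding S_def by blast
    qed
    hence "|X| <o |S - E|" using not_ordLeq_iff_ordLess[OF card_of_Well_order card_of_Well_order] by blast
    hence "|W| \<le>o |S - E|" by (rule ordLess_imp_ordLeq[OF ordLeq_ordLess_trans[OF WX']])
    then obtain g where g: "inj_on g W" "g ` W \<subseteq> S - E" unfolding card_of_ordLeq[symmetric] by blast
    have "|g ` W| =o |W|" using ordIso_symmetric[OF card_of_ordIsoI[OF inj_on_imp_bij_betw[OF g(1)]]] .
    thus ?thesis using g(2) by blast
  qed
  define P where "P E = (if \<exists>P. P \<subseteq> S - E \<and> |P| =o |W| then SOME P. P \<subseteq> S - E \<and> |P| =o |W| else {})" for E
  have P1: "P E \<subseteq> S - E \<and> |P E| \<le>o |W|" for E
  proof (cases "\<exists>P. P \<subseteq> S - E \<and> |P| =o |W|")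
    case True
    hence "P E \<subseteq> S - E \<and> |P E| =o |W|" unfolding P_def using someI_ex[OF True] by simp
    thus ?thesis using ordIso_imp_ordLeq by blast
  next
    case False
    have "P E = {}" unfolding P_def by (rule if_not_P[OF False])
    thus ?thesis using card_of_empty by simp
  qed
  have P2: "|P E| =o |W|" if "|E| \<le>o |X|" for E
  proof -
    have ex: "\<exists>P. P \<subseteq> S - E \<and> |P| =o |W|" using Pex[OF that] .
    thus ?thesis unfolding P_def using someI_ex[OF ex] by simp
  qed
  define H where "H g \<alpha> = clo F (insert (s \<alpha>) (P (\<Union>(g ` underS R \<alpha>)))) - \<Union>(g ` underS R \<alpha>)"
    for g :: "'a set \<Rightarrow> 'a set set" and \<alpha>
  have adm: "wo_rel.adm_wo R H"
    unfolding wo_rel.adm_wo_def[OF wo]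
  proof (intro allI impI)
    fix f g :: "'a set \<Rightarrow> 'a set set" and x assume "\<forall>y\<in>underS R x. f y = g y"
    hence "f ` underS R x = g ` underS R x" by (intro image_cong) auto
    thus "H f x = H g x" unfolding H_def by simp
  qed
  define L where "L = wo_rel.worec R H"
  have "wo_rel.worec R H = H (wo_rel.worec R H)" by (rule wo_rel.worec_fixpoint[OF wo adm])
  hence LH: "L = H L" unfolding L_def .
  define E where "E \<alpha> = \<Union>(L ` underS R \<alpha>)" for \<alpha>
  have Leq: "L \<alpha> = clo F (insert (s \<alpha>) (P (E \<alpha>))) - E \<alpha>" for \<alpha>
    using fun_cong[OF LH, of \<alpha>] unfolding H_def E_def .
  have uK: "underS R \<alpha> \<subseteq> K" for \<alpha> unfolding K_def underS_def Field_def by blast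
  have Lbasic: "L \<alpha> \<subseteq> S \<and> |L \<alpha>| \<le>o |W|" if "\<alpha> \<in> K" for \<alpha>
  proof -
    let ?A = "insert (s \<alpha>) (P (E \<alpha>))"
    have AS: "?A \<subseteq> ctbl_subsets X" using sS[OF that] P1[of "E \<alpha>"] unfolding S_def by blast
    have "|{s \<alpha>}| \<le>o |W|" by (rule ctbl_le[OF countable_finite[OF finite.insertI[OF finite.emptyI]] WI])
    hence "|{s \<alpha>} \<union> P (E \<alpha>)| \<le>o |W|" using Un_le[OF WI] P1[of "E \<alpha>"] by blast
    hence AW: "|?A| \<le>o |Field (cardSuc natLeq)|" unfolding W_def by simp
    have c: "clo F ?A \<subseteq> S \<and> |clo F ?A| \<le>o |W|"
      using clo_props[OF GCH F AS AW] unfolding S_def W_def .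
    have "L \<alpha> \<subseteq> clo F ?A" using Leq by blast
    hence "|L \<alpha>| \<le>o |W|" using c by (blast intro: ordLeq_transitive[OF card_of_mono1])
    thus ?thesis using c \<open>L \<alpha> \<subseteq> clo F ?A\<close> by blast
  qed
  have Ele: "|E \<alpha>| \<le>o |X|" if "\<alpha> \<in> K" for \<alpha>
    unfolding E_def
  proof (rule card_of_UNION_ordLeq_infinite[OF XI underS_le[OF that]], rule ballI)
    fix \<eta> assume "\<eta> \<in> underS R \<alpha>"
    hence "\<eta> \<in> K" using uK by blast
    thus "|L \<eta>| \<le>o |X|" using Lbasic by (blast intro: ordLeq_transitive[OF _ WX'])
  qed
  have LP: "P (E \<alpha>) \<subseteq> L \<alpha>" for \<alpha>
    using P1[of "E \<alpha>"] clo_sup[of "insert (s \<alpha>) (P (E \<alpha>))" F] unfolding Leq[of \<alpha>] by blast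
  have Liso: "|L \<alpha>| =o |W|" if "\<alpha> \<in> K" for \<alpha>
  proof -
    have "|W| \<le>o |L \<alpha>|"
      using ordIso_ordLeq_trans[OF ordIso_symmetric[OF P2[OF Ele[OF that]]] card_of_mono1[OF LP]] .
    thus ?thesis using Lbasic[OF that] ordIso_iff_ordLeq by blast
  qed
  have Ldisj: "L \<alpha> \<inter> E \<alpha> = {}" for \<alpha> using Leq[of \<alpha>] by blast
  have Lcov: "s \<alpha> \<in> L \<alpha> \<union> E \<alpha>" for \<alpha>
    using clo_sup[of "insert (s \<alpha>) (P (E \<alpha>))" F] Leq[of \<alpha>] by blast
  have Lclo: "F x \<subseteq> L \<alpha> \<union> E \<alpha>" if "a \<in> L \<alpha>" "x \<in> ctbl_subsets a" for \<alpha> a x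
  proof -
    have "a \<in> clo F (insert (s \<alpha>) (P (E \<alpha>)))" using that(1) Leq[of \<alpha>] by blast
    from clo_closed[OF this that(2)] show ?thesis using Leq[of \<alpha>] by blast
  qed
  have disj: "\<alpha> = \<beta>" if "\<alpha> \<in> K" "\<beta> \<in> K" "y \<in> L \<alpha>" "y \<in> L \<beta>" for \<alpha> \<beta> y
  proof (rule ccontr)
    assume ne: "\<alpha> \<noteq> \<beta>"
    have "(\<alpha>, \<beta>) \<in> R \<or> (\<beta>, \<alpha>) \<in> R" using wo_rel.TOTALS[OF wo] that(1,2) unfolding K_def by blast
    thus False
    proof
      assume "(\<alpha>, \<beta>) \<in> R"
      hence "\<alpha> \<in> underS R \<beta>" using ne unfolding underS_def by blast
      hence "y \<in> E \<beta>" using that(3) unfolding E_def by blast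
      thus False using Ldisj[of \<beta>] that(4) by blast
    next
      assume "(\<beta>, \<alpha>) \<in> R"
      hence "\<beta> \<in> underS R \<alpha>" using ne unfolding underS_def by blast
      hence "y \<in> E \<alpha>" using that(4) unfolding E_def by blast
      thus False using Ldisj[of \<alpha>] that(3) by blast
    qed
  qed
  have "\<forall>\<alpha>\<in>K. \<exists>f. bij_betw f W (L \<alpha>)"
  proof
    fix \<alpha> assume "\<alpha> \<in> K"
    have "|W| =o |L \<alpha>|" by (rule ordIso_symmetric[OF Liso[OF \<open>\<alpha> \<in> K\<close>]])
    thus "\<exists>f. bij_betw f W (L \<alpha>)" unfolding card_of_ordIso[symmetric] .
  qed
  then obtain b where b: "\<And>\<alpha>. \<alpha> \<in> K \<Longrightarrow> bij_betw (b \<alpha>) W (L \<alpha>)" by metis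
  have bL: "b \<alpha> j \<in> L \<alpha>" if "\<alpha> \<in> K" "j \<in> W" for \<alpha> j using b[OF that(1)] that(2) bij_betwE by blast
  have inj: "inj_on (\<lambda>(\<alpha>, j). b \<alpha> j) (K \<times> W)"
  proof (rule inj_onI, clarify)
    fix \<alpha> j \<beta> i assume h: "\<alpha> \<in> K" "j \<in> W" "\<beta> \<in> K" "i \<in> W" "b \<alpha> j = b \<beta> i"
    have ab: "\<alpha> = \<beta>" using disj[OF h(1,3) bL[OF h(1,2)]] bL[OF h(3,4)] h(5) by simp
    have "j = i" using inj_onD[OF bij_betw_imp_inj_on[OF b[OF h(1)]] _ h(2)] h(4,5) ab by simp
    thus "\<alpha> = \<beta> \<and> j = i" using ab by blast
  qed
  have img: "(\<lambda>(\<alpha>, j). b \<alpha> j) ` (K \<times> W) = S"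
  proof
    show "(\<lambda>(\<alpha>, j). b \<alpha> j) ` (K \<times> W) \<subseteq> S"
    proof
      fix y assume "y \<in> (\<lambda>(\<alpha>, j). b \<alpha> j) ` (K \<times> W)"
      then obtain \<alpha> j where aj: "\<alpha> \<in> K" "j \<in> W" "y = b \<alpha> j" by auto
      have "b \<alpha> j \<in> L \<alpha>" by (rule bL[OF aj(1,2)])
      moreover have "L \<alpha> \<subseteq> S" using Lbasic[OF aj(1)] by (rule conjunct1)
      ultimately show "y \<in> S" using aj(3) by blast
    qed
  next
    show "S \<subseteq> (\<lambda>(\<alpha>, j). b \<alpha> j) ` (K \<times> W)"
    proof
      fix y assume "y \<in> S"
      then obtain \<alpha> where \<alpha>: "\<alpha> \<in> K" "y = s \<alpha>" using s unfolding bij_betw_def by blast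
      have "y \<in> L \<alpha> \<union> E \<alpha>" using Lcov \<alpha>(2) by simp
      have "\<exists>\<eta>. \<eta> \<in> K \<and> y \<in> L \<eta>"
      proof (cases "y \<in> L \<alpha>")
        case True thus ?thesis using \<alpha>(1) by blast
      next
        case False
        hence "y \<in> E \<alpha>" using \<open>y \<in> L \<alpha> \<union> E \<alpha>\<close> by blast
        then obtain \<eta> where "\<eta> \<in> underS R \<alpha>" "y \<in> L \<eta>" unfolding E_def by blast
        thus ?thesis using uK by blast
      qed
      then obtain \<eta> where \<eta>: "\<eta> \<in> K" "y \<in> L \<eta>" by blast
      then obtain i where "i \<in> W" "y = b \<eta> i"
        using bij_betw_imp_surj_on[OF b[OF \<eta>(1)]] by blast
      thus "y \<in> (\<lambda>(\<alpha>, j). b \<alpha> j) ` (K \<times> W)"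
        using image_eqI[of y "\<lambda>(\<alpha>, j). b \<alpha> j" "(\<eta>, i)" "K \<times> W"] \<eta>(1) by simp
    qed
  qed
  have clos: "\<exists>\<eta> i. y = b \<eta> i \<and> \<eta> \<in> K \<and> (\<eta>, \<alpha>) \<in> R \<and> i \<in> W"
    if h: "\<alpha> \<in> K" "j \<in> W" "x \<in> ctbl_subsets (b \<alpha> j)" "y \<in> F x" for \<alpha> j x y
  proof -
    have "y \<in> L \<alpha> \<union> E \<alpha>" using Lclo[OF bL[OF h(1,2)] h(3)] h(4) by blast
    then obtain \<eta> where \<eta>: "\<eta> \<in> K" "(\<eta>, \<alpha>) \<in> R" "y \<in> L \<eta>"
    proof
      assume "y \<in> L \<alpha>"
      moreover have "(\<alpha>, \<alpha>) \<in> R" using wo_rel.REFL[OF wo] h(1) unfolding K_def refl_on_def by blast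
      ultimately show thesis using that h(1) by blast
    next
      assume "y \<in> E \<alpha>"
      then obtain \<eta> where "\<eta> \<in> underS R \<alpha>" "y \<in> L \<eta>" unfolding E_def by blast
      moreover from this have "\<eta> \<in> K" "(\<eta>, \<alpha>) \<in> R" using uK unfolding underS_def by blast+
      ultimately show thesis using that by blast
    qed
    then obtain i where "i \<in> W" "y = b \<eta> i"
      using bij_betw_imp_surj_on[OF b[OF \<eta>(1)]] by blast
    thus ?thesis using \<eta> by blast
  qed
  have fin: "bij_betw (\<lambda>(\<alpha>, j). b \<alpha> j) (K \<times> W) S \<and>
     (\<forall>\<alpha> \<in> K. \<forall>j \<in> W. \<forall>x \<in> ctbl_subsets (b \<alpha> j). \<forall>y \<in> F x. \<exists>\<eta> i. y = b \<eta> i \<and>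
          \<eta> \<in> K \<and> (\<eta>, \<alpha>) \<in> R \<and> i \<in> W)"
    using inj img clos unfolding bij_betw_def by blast
  show ?thesis unfolding K_def[symmetric] R_def[symmetric] W_def[symmetric] S_def[symmetric]
    using fin by blast
qed

end

theorem lemma8:
  fixes X :: "'a set" and F :: "'a set \<Rightarrow> 'a set set"
  assumes GCH: "GCH_on_type TYPE('a)"
    and X: "is_aleph_omega X"
    and F: "\<forall>x \<in> ctbl_subsets X. F x \<in> ctbl_subsets (ctbl_subsets X)"
  shows "\<exists>a :: 'a set \<Rightarrow> nat set \<Rightarrow> 'a set.
     bij_betw (\<lambda>(\<alpha>, j). a \<alpha> j)
       (Field (cardSuc (card_of X)) \<times> Field (cardSuc natLeq)) (ctbl_subsets X) \<and>
     (\<forall>\<alpha> \<in> Field (cardSuc (card_of X)). \<forall>j \<in> Field (cardSuc natLeq).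
        \<forall>x \<in> ctbl_subsets (a \<alpha> j).
          F x \<subseteq> {a \<eta> i | \<eta> i. \<eta> \<in> Field (cardSuc (card_of X)) \<and> (\<eta>, \<alpha>) \<in> cardSuc (card_of X)\<and>
                                 i \<in> Field (cardSuc natLeq)})"
proof -
  obtain a :: "'a set \<Rightarrow> nat set \<Rightarrow> 'a set" where
    a1: "bij_betw (\<lambda>(\<alpha>, j). a \<alpha> j)
       (Field (cardSuc (card_of X)) \<times> Field (cardSuc natLeq)) (ctbl_subsets X)" and
    a2: "\<forall>\<alpha> \<in> Field (cardSuc (card_of X)). \<forall>j \<in> Field (cardSuc natLeq).
        \<forall>x \<in> ctbl_subsets (a \<alpha> j). \<forall>y \<in> F x. \<exists>\<eta> i. y = a \<eta> i \<and>
          \<eta> \<in> Field (cardSuc (card_of X)) \<and> (\<eta>, \<alpha>) \<in> cardSuc (card_of X) \<and> i \<in> Field (cardSuc natLeq)"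
    using main_constr[OF GCH X F] by blast
  show ?thesis
  proof (intro exI[of _ a] conjI)
    show "bij_betw (\<lambda>(\<alpha>, j). a \<alpha> j)
       (Field (cardSuc (card_of X)) \<times> Field (cardSuc natLeq)) (ctbl_subsets X)" by (rule a1)
    show "\<forall>\<alpha> \<in> Field (cardSuc (card_of X)). \<forall>j \<in> Field (cardSuc natLeq).
        \<forall>x \<in> ctbl_subsets (a \<alpha> j).
          F x \<subseteq> {a \<eta> i | \<eta> i. \<eta> \<in> Field (cardSuc (card_of X)) \<and> (\<eta>, \<alpha>) \<in> cardSuc (card_of X)\<and>
                                 i \<in> Field (cardSuc natLeq)}"
    proof (intro ballI subsetI)
      fix \<alpha> j x y
      assume "\<alpha> \<in> Field (cardSuc (card_of X))" "j \<in> Field (cardSuc natLeq)"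
        "x \<in> ctbl_subsets (a \<alpha> j)" "y \<in> F x"
      then obtain \<eta> i where "y = a \<eta> i" "\<eta> \<in> Field (cardSuc (card_of X))"
        "(\<eta>, \<alpha>) \<in> cardSuc (card_of X)" "i \<in> Field (cardSuc natLeq)"
        using a2 by blast
      thus "y \<in> {a \<eta> i | \<eta> i. \<eta> \<in> Field (cardSuc (card_of X)) \<and> (\<eta>, \<alpha>) \<in> cardSuc (card_of X)\<and>
                                 i \<in> Field (cardSuc natLeq)}" by blast
    qed
  qed
qed

end
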